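(* Let $f\colon M\to\mathbb{R}$ be a Morse function on a compact oriented smooth $n$-manifold, with Morse complex defined using a Morse–Smale metric. For any nontrivial commutative ring $\mathbb{K}$ with unity and any grading $k\in\{0,\dots,n-1\}$, $\beta^{alg}_k(f;\mathbb{K})=0$ if and only if $d_{f,k+1}=0$. Furthermore, if $\mathbb{K}$ is a field, then $\beta^{alg}_k(f;\mathbb{K})=\inf\{\beta\ge0:\ \forall\lambda\in\mathbb{R},\ \mathrm{Im}(d_{f,k+1})\cap CM^\lambda_k(f;\mathbb{K})\subset d_{f,k+1}(CM^{\lambda+\beta}_{k+1}(f;\mathbb{K}))\}$.
   Context: $CM_*(\pm f;\mathbb{K})$ are the Morse complexes (free $\mathbb{K}$-modules on critical points, the index of $p$ for $-f$ being $n-|p|_f$) with differentials $d_{\pm f}$ defined with the standard coherent orientation conventions: unstable manifolds of $f$ oriented arbitrarily (orientation of $M$ in index $n$, positive point in index $0$), stable manifolds oriented so that $W^u_f(p)\cap W^s_f(p)$ is a single positive point in the fiber product orientation, and $W^u_{-f}(p)=W^s_f(p)$. $\Pi(\sum_qa_qq,\sum_pb_pp)=\sum_pa_pb_p$ on $CM_{n-*}(-f)\times CM_*(f)$. $\Lambda\colon\mathrm{Im}(d_{-f})\times\mathrm{Im}(d_f)\to\mathbb{K}$, $\Lambda(x,y)=\Pi(x,z)$ for any $z$ with $d_fz=y$. $\ell_f(\sum_pa_pp)=\max\{f(p):a_p\ne0\}$ (with $\max\varnothing=-\infty$), $\ell_{-f}$ likewise for $-f$; $CM^\lambda_*(f;\mathbb{K})=\{y:\ell_f(y)\le\lambda\}$.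 $\beta^{alg}_k(f;\mathbb{K})=\sup(\{0\}\cup\{-\ell_{-f}(x)-\ell_f(y):x\in\mathrm{Im}(d_{-f,n-k}),y\in\mathrm{Im}(d_{f,k+1}),\Lambda(x,y)\ne0\})$. *)

theory Defs
  imports "HOL-Library.Extended_Real"
begin

text \<open>The critical points of the Morse function form the
finite type 'p.  ind p is the Morse index |p|_f, crit p = f(p) the critical value.
N p q is the (signed, integer) count of negative gradient flow lines from p to q,
so that d_f p = sum_q N p q q.  The Morse complex over a ring K consists of the
functions 'p => K (free K-module on the critical points), graded by the index.\<close>

definition chains :: "('p \<Rightarrow> nat) \<Rightarrow> nat \<Rightarrow> ('p \<Rightarrow> 'k::zero) set" where
  "chains ind k = {c. \<forall>p. c p \<noteq> 0 \<longrightarrow> ind p = k}"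

definition dF :: "('p::finite \<Rightarrow> 'p \<Rightarrow> int) \<Rightarrow> ('p \<Rightarrow> 'k::comm_ring_1) \<Rightarrow> ('p \<Rightarrow> 'k)" where
  "dF N c = (\<lambda>q. \<Sum>p\<in>UNIV. of_int (N p q) * c p)"

text \<open>Morse differential of -f: same flow lines (W^u_{-f}(p) = W^s_f(p)), with the
sign eps (ind q) coming from the coherent orientation conventions.\<close>
definition dMF :: "('p::finite \<Rightarrow> 'p \<Rightarrow> int) \<Rightarrow> (nat \<Rightarrow> int) \<Rightarrow> ('p \<Rightarrow> nat)
    \<Rightarrow> ('p \<Rightarrow> 'k::comm_ring_1) \<Rightarrow> ('p \<Rightarrow> 'k)" where
  "dMF N eps ind c = (\<lambda>p. \<Sum>q\<in>UNIV. of_int (eps (ind q) * N p q) * c q)"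

definition Pairing :: "('p::finite \<Rightarrow> 'k::comm_ring_1) \<Rightarrow> ('p \<Rightarrow> 'k) \<Rightarrow> 'k" where
  "Pairing x y = (\<Sum>p\<in>UNIV. x p * y p)"

definition LambdaF :: "('p::finite \<Rightarrow> 'p \<Rightarrow> int) \<Rightarrow> ('p \<Rightarrow> nat) \<Rightarrow> nat
    \<Rightarrow> ('p \<Rightarrow> 'k::comm_ring_1) \<Rightarrow> ('p \<Rightarrow> 'k) \<Rightarrow> 'k" where
  "LambdaF N ind k x y = Pairing x (SOME z. z \<in> chains ind (Suc k) \<and> dF N z = y)"

definition lev :: "('p::finite \<Rightarrow> real) \<Rightarrow> ('p \<Rightarrow> 'k::zero) \<Rightarrow> ereal" where
  "lev f c = (if (\<forall>p. c p = 0) then -\<infinity> else ereal (Max (f ` {p. c p \<noteq> 0})))"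

definition CMlev :: "('p::finite \<Rightarrow> nat) \<Rightarrow> ('p \<Rightarrow> real) \<Rightarrow> nat \<Rightarrow> real \<Rightarrow> ('p \<Rightarrow> 'k::zero) set" where
  "CMlev ind f k lam = {y \<in> chains ind k. lev f y \<le> ereal lam}"

definition beta_alg :: "'k::comm_ring_1 itself \<Rightarrow> ('p::finite \<Rightarrow> 'p \<Rightarrow> int) \<Rightarrow> (nat \<Rightarrow> int)
    \<Rightarrow> ('p \<Rightarrow> nat) \<Rightarrow> ('p \<Rightarrow> real) \<Rightarrow> nat \<Rightarrow> ereal" where
  "beta_alg (_::'k itself) N eps ind f k =
     Sup ({0} \<union> {- lev (\<lambda>p. - f p) x - lev f y | x y :: 'p \<Rightarrow> 'k.
            x \<in> dMF N eps ind ` chains ind k \<and> y \<in> dF N ` chains ind (Suc k) \<and>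
            LambdaF N ind k x y \<noteq> 0})"

end

theory Submission imports Defs "HOL-Library.Function_Algebras" begin
lemma sum_fun_app: "finite A \<Longrightarrow> (sum g A) x = sum (\<lambda>a. g a x) A"
  by (induct rule: finite_induct) (auto simp: plus_fun_def)

lemma functional_sep:
  fixes U :: "('p::finite \<Rightarrow> 'F::field) set" and y :: "'p \<Rightarrow> 'F"
  assumes U0: "0 \<in> U" and Uadd: "\<And>a b. a \<in> U \<Longrightarrow> b \<in> U \<Longrightarrow> a + b \<in> U"
    and Uscale: "\<And>c a. a \<in> U \<Longrightarrow> (\<lambda>p. c * a p) \<in> U"
    and yU: "y \<notin> U"
  shows "\<exists>u. (\<forall>v\<in>U. Pairing u v = 0) \<and> Pairing u y \<noteq> 0"
proof -
  interpret V: vector_space "\<lambda>(c::'F) (x::'p\<Rightarrow>'F). (\<lambda>p. c * x p)"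
    by unfold_locales (auto simp: algebra_simps)
  interpret P: vector_space_pair "\<lambda>(c::'F) (x::'p\<Rightarrow>'F). (\<lambda>p. c * x p)" "(*)::'F\<Rightarrow>'F\<Rightarrow>'F"
    by unfold_locales (auto simp: algebra_simps)
  have sub: "V.subspace U" unfolding V.subspace_def using U0 Uadd Uscale by auto
  obtain B0 where B0: "B0 \<subseteq> U" "V.independent B0" "U \<subseteq> V.span B0"
    using V.maximal_independent_subset by blast
  have spanB0: "V.span B0 = U"
    using B0 sub by (metis V.span_eq V.span_minimal subset_antisym)
  have yB0: "y \<notin> V.span B0" using spanB0 yU by simp
  define B where "B = insert y B0"
  have indB: "V.independent B" unfolding B_def using V.independent_insertI[OF yB0 B0(2)] .
  define g where "g = P.construct B (\<lambda>b. if b = y then 1 else 0)"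
  have lin: "Vector_Spaces.linear (\<lambda>(c::'F) (x::'p\<Rightarrow>'F). (\<lambda>p. c * x p)) (*) g"
    unfolding g_def by (rule P.linear_construct[OF indB])
  have gy: "g y = 1" unfolding g_def B_def using indB[unfolded B_def]
    by (subst P.construct_basis) auto
  have gB0: "g b = 0" if "b \<in> B0" for b
    unfolding g_def using indB that yB0 B_def
    by (subst P.construct_basis) (auto intro: V.span_base)
  have gU: "g v = 0" if "v \<in> U" for v
    using P.linear_eq_0_on_span[OF lin, of B0 v] gB0 that spanB0 by auto
  define u where "u q = g (\<lambda>p. if p = q then 1 else 0)" for q
  have decomp: "v = (\<Sum>q\<in>UNIV. (\<lambda>p. v q * (if p = q then 1 else 0)))" for v :: "'p \<Rightarrow> 'F"
    by (rule ext) (simp add: sum_fun_app if_distrib cong: if_cong)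
  have pair: "Pairing u v = g v" for v
  proof -
    have "g v = g (\<Sum>q\<in>UNIV. (\<lambda>p. v q * (if p = q then 1 else 0)))"
      using decomp[of v] by simp
    also have "\<dots> = (\<Sum>q\<in>UNIV. g (\<lambda>p. v q * (if p = q then 1 else 0)))"
      by (rule P.linear_sum[OF lin])
    also have "\<dots> = (\<Sum>q\<in>UNIV. v q * u q)"
      unfolding u_def by (intro sum.cong refl) (rule P.linear_scale[OF lin])
    finally show ?thesis unfolding Pairing_def by (simp add: mult.commute)
  qed
  show ?thesis using pair gU gy by (intro exI[of _ u]) auto
qed
lemma lev_le: "(\<And>p. c p \<noteq> 0 \<Longrightarrow> g p \<le> a) \<Longrightarrow> lev g (c :: 'p::finite \<Rightarrow> 'k::zero) \<le> ereal a"
  unfolding lev_def by auto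

lemma lev_attained: assumes "c p0 \<noteq> 0"
  shows "\<exists>p. c p \<noteq> 0 \<and> lev g (c :: 'p::finite \<Rightarrow> 'k::zero) = ereal (g p)"
proof -
  have ne: "g ` {p. c p \<noteq> 0} \<noteq> {}" using assms by auto
  have "Max (g ` {p. c p \<noteq> 0}) \<in> g ` {p. c p \<noteq> 0}" by (rule Max_in) (use ne in auto)
  then obtain p where "c p \<noteq> 0" "Max (g ` {p. c p \<noteq> 0}) = g p" by auto
  then show ?thesis using assms unfolding lev_def by auto
qed

lemma lev_ge: assumes "c p \<noteq> 0" shows "ereal (g p) \<le> lev g (c :: 'p::finite \<Rightarrow> 'k::zero)"
  using assms unfolding lev_def by auto

lemma lev_zero: "lev g (\<lambda>_::'p::finite. 0::'k::zero) = -\<infinity>"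
  unfolding lev_def by auto

lemma Pairing_zero_right: "Pairing u (\<lambda>_. 0) = 0"
  unfolding Pairing_def by simp

lemma Pairing_nz: "Pairing x z \<noteq> 0 \<Longrightarrow> \<exists>p. x p \<noteq> 0 \<and> z p \<noteq> 0"
  unfolding Pairing_def by (metis (mono_tags, lifting) mult_not_zero sum.neutral)

lemma Pairing_delta: "Pairing x (\<lambda>p. if p = a then 1 else 0) = x a"
  unfolding Pairing_def by (simp add: if_distrib cong: if_cong)

lemma Pairing_delta_left: "Pairing (\<lambda>p. if p = a then 1 else 0) x = x a"
proof -
  have e: "(\<lambda>p. (if p = a then 1 else 0) * x p) = (\<lambda>p. if p = a then x p else 0)" by auto
  show ?thesis unfolding Pairing_def e by simp
qed

lemma dF_zero: "dF N (\<lambda>_. 0) = (\<lambda>_. (0::'k::comm_ring_1))"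
  unfolding dF_def by simp

lemma dF_add: "dF N (a + b) = dF N a + (dF N b :: 'p::finite \<Rightarrow> 'k::comm_ring_1)"
  unfolding dF_def by (rule ext) (simp add: plus_fun_def sum.distrib algebra_simps)

lemma dF_scale: "dF N (\<lambda>p. c * w p) = (\<lambda>q. c * dF N w q :: 'k::comm_ring_1)"
  unfolding dF_def by (rule ext) (simp add: sum_distrib_left algebra_simps)

lemma dF_delta: "dF N (\<lambda>p. if p = a then 1 else 0) = (\<lambda>q. (of_int (N a q) :: 'k::comm_ring_1))"
  unfolding dF_def by (rule ext) (simp add: if_distrib cong: if_cong)

lemma dF_chains:
  assumes N_grading: "\<And>p q. N p q \<noteq> 0 \<Longrightarrow> ind p = Suc (ind q)"
    and z: "z \<in> chains ind (Suc k)"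
  shows "(dF N z :: 'p::finite \<Rightarrow> 'k::comm_ring_1) \<in> chains ind k"
  unfolding chains_def
proof (intro CollectI allI impI)
  fix q assume "dF N z q \<noteq> 0"
  then obtain p where "of_int (N p q) * z p \<noteq> (0::'k)" unfolding dF_def
    by (metis (mono_tags, lifting) sum.neutral)
  then have "N p q \<noteq> 0" "z p \<noteq> 0" by auto
  then show "ind q = k" using N_grading z unfolding chains_def by force
qed

lemma adj:
  assumes u: "u \<in> chains ind k"
  shows "Pairing (dMF N eps ind u) z = of_int (eps k) * Pairing u (dF N z :: 'p::finite \<Rightarrow> 'k::comm_ring_1)"
proof -
  have trm: "of_int (eps (ind q) * N p q) * u q * z p = of_int (eps k) * (u q * (of_int (N p q) * z p))" for p q
  proof (cases "u q = 0")
    case False then have "ind q = k" using u unfolding chains_def by auto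
    then show ?thesis by (simp add: of_int_mult mult_ac)
  qed simp
  have "Pairing (dMF N eps ind u) z = (\<Sum>p\<in>UNIV. \<Sum>q\<in>UNIV. of_int (eps (ind q) * N p q) * u q * z p)"
    unfolding Pairing_def dMF_def by (simp add: sum_distrib_right)
  also have "\<dots> = (\<Sum>p\<in>UNIV. \<Sum>q\<in>UNIV. of_int (eps k) * (u q * (of_int (N p q) * z p)))"
    using trm by simp
  also have "\<dots> = (\<Sum>q\<in>UNIV. \<Sum>p\<in>UNIV. of_int (eps k) * (u q * (of_int (N p q) * z p)))"
    by (rule sum.swap)
  also have "\<dots> = of_int (eps k) * Pairing u (dF N z)"
    unfolding Pairing_def dF_def by (simp add: sum_distrib_left)
  finally show ?thesis .
qed

lemma Lambda_eq:
  assumes u: "u \<in> chains ind k" and z: "z \<in> chains ind (Suc k)"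
  shows "LambdaF N ind k (dMF N eps ind u) (dF N z) = of_int (eps k) * Pairing u (dF N z :: 'p::finite \<Rightarrow> 'k::comm_ring_1)"
proof -
  let ?z = "SOME z'. z' \<in> chains ind (Suc k) \<and> dF N z' = dF N z"
  have "?z \<in> chains ind (Suc k) \<and> dF N ?z = dF N z" using someI[of "\<lambda>z'. z' \<in> chains ind (Suc k) \<and> dF N z' = dF N z" z] z by blast
  then show ?thesis unfolding LambdaF_def using adj[OF u, of N eps ?z] by simp
qed

lemma eps_unit: "eps k = 1 \<or> eps k = -1 \<Longrightarrow> (of_int (eps k) * (a::'k::comm_ring_1) = 0) = (a = 0)"
  by auto


lemma part1:
  fixes N :: "'p::finite \<Rightarrow> 'p \<Rightarrow> int" and eps :: "nat \<Rightarrow> int"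
    and ind :: "'p \<Rightarrow> nat" and f :: "'p \<Rightarrow> real" and k :: nat
  assumes N_grading: "\<And>p q. N p q \<noteq> 0 \<Longrightarrow> ind p = Suc (ind q)"
    and N_decr: "\<And>p q. N p q \<noteq> 0 \<Longrightarrow> f q < f p"
    and eps_sign: "\<And>m. eps m = 1 \<or> eps m = -1"
  shows "beta_alg TYPE('k::comm_ring_1) N eps ind f k = 0 \<longleftrightarrow>
            (\<forall>c \<in> chains ind (Suc k). (\<forall>q. dF N (c :: 'p \<Rightarrow> 'k) q = 0))"
proof -
  define S0 where "S0 = {- lev (\<lambda>p. - f p) x - lev f y | x y :: 'p \<Rightarrow> 'k.
            x \<in> dMF N eps ind ` chains ind k \<and> y \<in> dF N ` chains ind (Suc k) \<and>
            LambdaF N ind k x y \<noteq> 0}"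
  have B: "beta_alg TYPE('k) N eps ind f k = Sup ({0} \<union> S0)"
    unfolding beta_alg_def S0_def by simp
  show ?thesis
  proof
    assume H: "beta_alg TYPE('k) N eps ind f k = 0"
    show "\<forall>c \<in> chains ind (Suc k). (\<forall>q. dF N (c :: 'p \<Rightarrow> 'k) q = 0)"
    proof (rule ccontr)
      assume "\<not> ?thesis"
      then obtain c q where c: "c \<in> chains ind (Suc k)" and cq: "dF N (c :: 'p \<Rightarrow> 'k) q \<noteq> 0" by auto
      then obtain p where "of_int (N p q) * c p \<noteq> (0::'k)" unfolding dF_def
        by (metis (mono_tags, lifting) sum.neutral)
      then have pq1: "of_int (N p q) \<noteq> (0::'k)" and "c p \<noteq> 0" by auto
      then have pq2: "ind p = Suc k" using c unfolding chains_def by auto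
      define S where "S = {(p,q). ind p = Suc k \<and> of_int (N p q) \<noteq> (0::'k)}"
      have pqS: "(p,q) \<in> S" using pq1 pq2 unfolding S_def by auto
      define Q where "Q = snd ` S"
      have "Max (f ` Q) \<in> f ` Q" by (rule Max_in) (use pqS Q_def in auto)
      then obtain q0 where q0Q: "q0 \<in> Q" and q0M: "f q0 = Max (f ` Q)" by auto
      have q0max: "f q \<le> f q0" if "q \<in> Q" for q unfolding q0M using that by (simp add: Max_ge)
      define P0 where "P0 = {p. (p,q0) \<in> S}"
      have P0ne: "P0 \<noteq> {}" using q0Q unfolding Q_def P0_def by force
      have "Min (f ` P0) \<in> f ` P0" by (rule Min_in) (use P0ne in auto)
      then obtain p0 where p0P: "p0 \<in> P0" and p0M: "f p0 = Min (f ` P0)" by auto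
      have p0min: "f p0 \<le> f p" if "p \<in> P0" for p unfolding p0M using that by (simp add: Min_le)
      have S0': "of_int (N p0 q0) \<noteq> (0::'k)" "ind p0 = Suc k" using p0P unfolding P0_def S_def by auto
      then have Np0q0: "N p0 q0 \<noteq> 0" by auto
      have indq0: "ind q0 = k" using N_grading[OF Np0q0] S0' by simp
      define dp where "dp = (\<lambda>p. if p = p0 then (1::'k) else 0)"
      define dq where "dq = (\<lambda>p. if p = q0 then (1::'k) else 0)"
      have dpc: "dp \<in> chains ind (Suc k)" unfolding dp_def chains_def using S0' by auto
      have dqc: "dq \<in> chains ind k" unfolding dq_def chains_def using indq0 by auto
      define y where "y = dF N dp"
      define x where "x = dMF N eps ind dq"
      have y_eq: "y q' = of_int (N p0 q')" for q' unfolding y_def dp_def dF_delta by simp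
      have x_eq: "x p' = of_int (eps (ind q0) * N p' q0)" for p'
        unfolding x_def dMF_def dq_def by (simp add: if_distrib cong: if_cong)
      have Lam0: "LambdaF N ind k x y = of_int (eps k) * Pairing dq (dF N dp)"
        unfolding x_def y_def by (rule Lambda_eq[OF dqc dpc])
      have Lam1: "Pairing dq (dF N dp) = of_int (N p0 q0)"
        unfolding dq_def dp_def dF_delta Pairing_delta_left ..
      have Lam: "LambdaF N ind k x y = of_int (eps k) * of_int (N p0 q0)" using Lam0 Lam1 by simp
      have Lnz: "LambdaF N ind k x y \<noteq> 0" unfolding Lam using eps_sign[of k] S0'(1) by auto
      have "y q0 \<noteq> 0" using y_eq S0' by simp
      then obtain qy where qy: "y qy \<noteq> 0" "lev f y = ereal (f qy)" using lev_attained by blast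
      have "(p0, qy) \<in> S" using qy y_eq S0' unfolding S_def by auto
      then have fqy: "f qy \<le> f q0" using q0max Q_def by force
      have "x p0 \<noteq> 0" using x_eq S0' indq0 eps_sign[of k] by (auto simp: of_int_mult)
      then obtain px where px: "x px \<noteq> 0" "lev (\<lambda>p. - f p) x = ereal (- f px)" using lev_attained by blast
      have "of_int (N px q0) \<noteq> (0::'k)" using px x_eq by (auto simp: of_int_mult)
      moreover then have "N px q0 \<noteq> 0" by auto
      ultimately have "ind px = Suc k" using N_grading indq0 by simp
      then have "px \<in> P0" using \<open>of_int (N px q0) \<noteq> (0::'k)\<close> unfolding P0_def S_def by simp
      then have fpx: "f p0 \<le> f px" using p0min by auto
      have e: "ereal (f px - f qy) = - lev (\<lambda>p. - f p) x - lev f y" using px(2) qy(2) by simp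
      have xi: "x \<in> dMF N eps ind ` chains ind k" using dqc x_def by blast
      have yi: "y \<in> dF N ` chains ind (Suc k)" using dpc y_def by blast
      have mem: "ereal (f px - f qy) \<in> S0" unfolding S0_def using e xi yi Lnz by blast
      have "ereal (f px - f qy) \<le> Sup ({0} \<union> S0)" using mem by (intro Sup_upper) auto
      moreover have "f px - f qy > 0" using fpx fqy N_decr[OF Np0q0] by linarith
      ultimately show False using H B by auto
    qed
  next
    assume H: "\<forall>c \<in> chains ind (Suc k). (\<forall>q. dF N (c :: 'p \<Rightarrow> 'k) q = 0)"
    have "S0 = {}"
    proof (rule ccontr)
      assume "S0 \<noteq> {}"
      then obtain u z where u: "u \<in> chains ind k" and z: "z \<in> chains ind (Suc k)"
        and L: "LambdaF N ind k (dMF N eps ind u) (dF N z :: 'p \<Rightarrow> 'k) \<noteq> 0"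
        unfolding S0_def by blast
      have "dF N z = (\<lambda>_. 0)" using H z by auto
      then show False using L unfolding Lambda_eq[OF u z] by (simp add: Pairing_zero_right)
    qed
    then show "beta_alg TYPE('k) N eps ind f k = 0" using B by simp
  qed
qed


lemma part2:
  fixes N :: "'p::finite \<Rightarrow> 'p \<Rightarrow> int" and eps :: "nat \<Rightarrow> int"
    and ind :: "'p \<Rightarrow> nat" and f :: "'p \<Rightarrow> real" and k :: nat
  assumes N_grading: "\<And>p q. N p q \<noteq> 0 \<Longrightarrow> ind p = Suc (ind q)"
    and eps_sign: "\<And>m. eps m = 1 \<or> eps m = -1"
  shows "beta_alg TYPE('F::field) N eps ind f k =
           Inf (ereal ` {\<beta>. \<beta> \<ge> 0 \<and> (\<forall>lam::real.
              dF N ` chains ind (Suc k) \<inter> CMlev ind f k lam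
                \<subseteq> dF N ` (CMlev ind f (Suc k) (lam + \<beta>) :: ('p \<Rightarrow> 'F) set))})"
proof -
  define S0 where "S0 = {- lev (\<lambda>p. - f p) x - lev f y | x y :: 'p \<Rightarrow> 'F.
            x \<in> dMF N eps ind ` chains ind k \<and> y \<in> dF N ` chains ind (Suc k) \<and>
            LambdaF N ind k x y \<noteq> 0}"
  define Bs where "Bs = {\<beta>. \<beta> \<ge> 0 \<and> (\<forall>lam::real.
              dF N ` chains ind (Suc k) \<inter> CMlev ind f k lam
                \<subseteq> dF N ` (CMlev ind f (Suc k) (lam + \<beta>) :: ('p \<Rightarrow> 'F) set))}"
  have B: "beta_alg TYPE('F) N eps ind f k = Sup ({0} \<union> S0)"
    unfolding beta_alg_def S0_def by simp
  have le1: "Sup ({0} \<union> S0) \<le> Inf (ereal ` Bs)"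
  proof (rule Inf_greatest)
    fix e assume "e \<in> ereal ` Bs"
    then obtain \<beta> where e: "e = ereal \<beta>" and bB: "\<beta> \<in> Bs" by auto
    show "Sup ({0} \<union> S0) \<le> e"
    proof (rule Sup_least)
      fix v assume "v \<in> {0} \<union> S0"
      then consider "v = 0" | "v \<in> S0" by auto
      then show "v \<le> e"
      proof cases
        case 1 then show ?thesis using bB e Bs_def by auto
      next
        case 2
        then obtain u z0 where u: "u \<in> chains ind k" and z0: "z0 \<in> chains ind (Suc k)"
          and L: "LambdaF N ind k (dMF N eps ind u) (dF N z0 :: 'p \<Rightarrow> 'F) \<noteq> 0"
          and v: "v = - lev (\<lambda>p. - f p) (dMF N eps ind u) - lev f (dF N z0)"
          unfolding S0_def by blast
        define x where "x = dMF N eps ind u"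
        define y where "y = dF N z0"
        have L2: "Pairing u y \<noteq> 0" using L unfolding Lambda_eq[OF u z0] y_def by auto
        have "y \<noteq> (\<lambda>_. 0)" using L2 Pairing_zero_right by metis
        then obtain q1 where "y q1 \<noteq> 0" by auto
        then obtain qa where qa: "y qa \<noteq> 0" "lev f y = ereal (f qa)" using lev_attained by blast
        have yc: "y \<in> chains ind k" unfolding y_def by (rule dF_chains[OF N_grading z0])
        have "y \<in> dF N ` chains ind (Suc k) \<inter> CMlev ind f k (f qa)"
          unfolding CMlev_def using yc qa z0 y_def by auto
        then have "y \<in> dF N ` (CMlev ind f (Suc k) (f qa + \<beta>) :: ('p \<Rightarrow> 'F) set)"
          using bB unfolding Bs_def by blast
        then obtain z where z: "z \<in> chains ind (Suc k)" "lev f z \<le> ereal (f qa + \<beta>)" "y = dF N z"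
          unfolding CMlev_def by auto
        have "Pairing x z = of_int (eps k) * Pairing u y" unfolding x_def z(3) by (rule adj[OF u])
        then have "Pairing x z \<noteq> 0" using L2 eps_sign[of k] by auto
        then obtain p where p: "x p \<noteq> 0" "z p \<noteq> 0" using Pairing_nz by blast
        obtain px where px: "x px \<noteq> 0" "lev (\<lambda>p. - f p) x = ereal (- f px)"
          using lev_attained[where c=x, OF p(1)] by blast
        have "ereal (- f p) \<le> ereal (- f px)" using lev_ge[where c=x and p=p and g="\<lambda>p. - f p", OF p(1)] px(2) by simp
        moreover have "ereal (f p) \<le> ereal (f qa + \<beta>)" using lev_ge[where c=z and p=p and g=f, OF p(2)] z(2) by (rule order.trans)
        ultimately have "f px - f qa \<le> \<beta>" by simp
        moreover have "v = ereal (f px - f qa)" using v px(2) qa(2) unfolding x_def y_def by simp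
        ultimately show ?thesis using e by simp
      qed
    qed
  qed
  have ge0: "0 \<le> Sup ({0} \<union> S0)" by (rule Sup_upper) simp
  have le2: "Inf (ereal ` Bs) \<le> Sup ({0} \<union> S0)"
  proof (cases "Sup ({0} \<union> S0)")
    case (real L)
    have L0: "L \<ge> 0" using ge0 real by (metis zero_ereal_def ereal_less_eq(3))
    have LB: "L \<in> Bs" unfolding Bs_def
    proof (intro CollectI conjI allI subsetI L0)
      fix lam y assume yin: "y \<in> dF N ` chains ind (Suc k) \<inter> (CMlev ind f k lam :: ('p \<Rightarrow> 'F) set)"
      then obtain z0 where z0: "z0 \<in> chains ind (Suc k)" "y = dF N z0" by auto
      have ylev: "lev f y \<le> ereal lam" and yc: "y \<in> chains ind k" using yin unfolding CMlev_def by auto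
      show "y \<in> dF N ` (CMlev ind f (Suc k) (lam + L))"
      proof (cases "\<forall>q. y q = 0")
        case True
        then have "y = dF N (\<lambda>_. 0)" by (auto simp: dF_zero)
        moreover have "(\<lambda>_. 0) \<in> (CMlev ind f (Suc k) (lam + L) :: ('p \<Rightarrow> 'F) set)"
          unfolding CMlev_def chains_def by (simp add: lev_zero)
        ultimately show ?thesis by blast
      next
        case False
        then obtain q1 where "y q1 \<noteq> 0" by auto
        then obtain qa where qa: "y qa \<noteq> 0" "lev f y = ereal (f qa)" using lev_attained by blast
        have aq: "f qa \<le> lam" using ylev qa by simp
        define \<mu> where "\<mu> = f qa + L"
        define W where "W = {w. w \<in> (chains ind (Suc k) :: ('p \<Rightarrow> 'F) set) \<and> (\<forall>p. w p \<noteq> 0 \<longrightarrow> f p \<le> \<mu>)}"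
        define U where "U = dF N ` (W :: ('p \<Rightarrow> 'F) set)"
        show ?thesis
        proof (rule ccontr)
          assume nin: "y \<notin> dF N ` (CMlev ind f (Suc k) (lam + L))"
          have yU: "y \<notin> U"
          proof
            assume "y \<in> U"
            then obtain w where w: "w \<in> W" "y = dF N w" unfolding U_def by auto
            have "lev f w \<le> ereal (lam + L)" using w(1) aq unfolding W_def \<mu>_def
              by (intro lev_le) auto
            then have "w \<in> CMlev ind f (Suc k) (lam + L)" using w(1) unfolding W_def CMlev_def by auto
            then show False using nin w(2) by blast
          qed
          have U0: "0 \<in> U"
          proof -
            have "(\<lambda>_. 0) \<in> W" unfolding W_def chains_def by simp
            moreover have "0 = dF N (\<lambda>_. 0 :: 'F)" by (simp add: dF_zero zero_fun_def)
            ultimately show ?thesis unfolding U_def by blast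
          qed
          have Uadd: "a + b \<in> U" if ab: "a \<in> U" "b \<in> U" for a b
          proof -
            obtain wa wb where "wa \<in> W" "wb \<in> W" "a = dF N wa" "b = dF N wb" using ab U_def by auto
            moreover have "wa + wb \<in> W" using \<open>wa \<in> W\<close> \<open>wb \<in> W\<close> unfolding W_def chains_def
              by (auto simp: plus_fun_def) (metis add.right_neutral add_0)+
            moreover have "a + b = dF N (wa + wb)" using calculation by (simp add: dF_add)
            ultimately show ?thesis unfolding U_def by (intro rev_image_eqI[of "wa + wb"]) auto
          qed
          have Uscale: "(\<lambda>p. c * a p) \<in> U" if aU: "a \<in> U" for c a
          proof -
            obtain w where "w \<in> W" "a = dF N w" using aU U_def by auto
            moreover have "(\<lambda>p. c * w p) \<in> W" using \<open>w \<in> W\<close> unfolding W_def chains_def by auto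
            moreover have "(\<lambda>p. c * a p) = dF N (\<lambda>p. c * w p)" using calculation by (simp add: dF_scale)
            ultimately show ?thesis unfolding U_def by (intro rev_image_eqI[of "\<lambda>p. c * w p"]) auto
          qed
          obtain u where u1: "\<forall>v\<in>U. Pairing u v = 0" and u2: "Pairing u y \<noteq> 0"
            using functional_sep[OF U0 Uadd Uscale yU] by blast
          define u' where "u' = (\<lambda>q. if ind q = k then u q else 0)"
          have u'c: "u' \<in> chains ind k" unfolding u'_def chains_def by auto
          have u'P: "Pairing u' v = Pairing u v" if "v \<in> chains ind k" for v
            unfolding Pairing_def u'_def using that unfolding chains_def
            by (intro sum.cong refl) auto
          define x where "x = dMF N eps ind u'"
          have Lam: "LambdaF N ind k x y = of_int (eps k) * Pairing u y"
            unfolding x_def z0(2) Lambda_eq[OF u'c z0(1)] using u'P dF_chains[OF N_grading z0(1)] by simp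
          have Lnz: "LambdaF N ind k x y \<noteq> 0" unfolding Lam using u2 eps_sign[of k] by auto
          have xbig: "f p > \<mu>" if "x p \<noteq> 0" for p
          proof (rule ccontr)
            assume "\<not> f p > \<mu>"
            define dp where "dp = (\<lambda>p'. if p' = p then (1::'F) else 0)"
            have xp: "x p = of_int (eps k) * Pairing u' (dF N dp)"
              using adj[OF u'c, of N eps dp] unfolding x_def dp_def Pairing_delta by simp
            show False
            proof (cases "ind p = Suc k")
              case True
              then have "dp \<in> W" unfolding W_def chains_def dp_def using \<open>\<not> f p > \<mu>\<close> by auto
              then have "dF N dp \<in> U" unfolding U_def by blast
              then have "Pairing u (dF N dp) = 0" using u1 by blast
              moreover have "dp \<in> chains ind (Suc k)" using \<open>dp \<in> W\<close> unfolding W_def by blast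
              then have "dF N dp \<in> chains ind k" using dF_chains[where z=dp and N=N and ind=ind and k=k, OF N_grading] by blast
              ultimately show False using xp that u'P by simp
            next
              case False
              have "Pairing u' (dF N dp) = 0" unfolding Pairing_def
              proof (intro sum.neutral ballI)
                fix q
                show "u' q * dF N dp q = 0"
                proof (cases "u' q = 0")
                  case F2: False
                  then have "ind q = k" using u'c unfolding chains_def by auto
                  then have "N p q = 0" using N_grading[of p q] False by auto
                  then show ?thesis unfolding dp_def dF_delta by simp
                qed simp
              qed
              then show False using xp that by simp
            qed
          qed
          have "x \<noteq> (\<lambda>_. 0)"
          proof
            assume "x = (\<lambda>_. 0)"
            then have "Pairing x z0 = 0" unfolding Pairing_def by simp
            moreover have "Pairing x z0 = LambdaF N ind k x y"
              unfolding x_def z0(2) Lambda_eq[OF u'c z0(1)] by (rule adj[OF u'c])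
            ultimately show False using Lnz by simp
          qed
          then obtain p1 where "x p1 \<noteq> 0" by auto
          then obtain px where px: "x px \<noteq> 0" "lev (\<lambda>p. - f p) x = ereal (- f px)"
            using lev_attained by blast
          have e: "ereal (f px - f qa) = - lev (\<lambda>p. - f p) x - lev f y" using px(2) qa(2) by simp
          have xi: "x \<in> dMF N eps ind ` chains ind k" using u'c x_def by blast
          have yi: "y \<in> dF N ` chains ind (Suc k)" using z0 by blast
          have mem: "ereal (f px - f qa) \<in> S0" unfolding S0_def using e xi yi Lnz by blast
          have "ereal (f px - f qa) \<le> Sup ({0} \<union> S0)" using mem by (intro Sup_upper) auto
          then have "f px - f qa \<le> L" using real by simp
          moreover have "f px > \<mu>" using xbig px(1) by blast
          ultimately show False unfolding \<mu>_def by simp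
        qed
      qed
    qed
    then show ?thesis using real by (simp add: Inf_lower)
  next
    case PInf then show ?thesis by simp
  next
    case MInf then show ?thesis using ge0 by simp
  qed
  have "Sup ({0} \<union> S0) = Inf (ereal ` Bs)" by (rule antisym[OF le1 le2])
  then show ?thesis unfolding B Bs_def .
qed

theorem proposition5p6:
  fixes N :: "'p::finite \<Rightarrow> 'p \<Rightarrow> int" and eps :: "nat \<Rightarrow> int"
    and ind :: "'p \<Rightarrow> nat" and f :: "'p \<Rightarrow> real" and n k :: nat
  assumes ind_le: "\<And>p. ind p \<le> n"
    and N_grading: "\<And>p q. N p q \<noteq> 0 \<Longrightarrow> ind p = Suc (ind q)"
    and N_decr: "\<And>p q. N p q \<noteq> 0 \<Longrightarrow> f q < f p"
    and dd_zero: "\<And>p r. (\<Sum>q\<in>UNIV. N p q * N q r) = 0"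
    and eps_sign: "\<And>m. eps m = 1 \<or> eps m = -1"
    and k_lt: "k < n"
  shows "(beta_alg TYPE('k::comm_ring_1) N eps ind f k = 0 \<longleftrightarrow>
            (\<forall>c \<in> chains ind (Suc k). (\<forall>q. dF N (c :: 'p \<Rightarrow> 'k) q = 0)))
       \<and> beta_alg TYPE('F::field) N eps ind f k =
           Inf (ereal ` {\<beta>. \<beta> \<ge> 0 \<and> (\<forall>lam::real.
              dF N ` chains ind (Suc k) \<inter> CMlev ind f k lam
                \<subseteq> dF N ` (CMlev ind f (Suc k) (lam + \<beta>) :: ('p \<Rightarrow> 'F) set))})"
  using part1[of N ind f eps k] part2[of N ind eps f k] N_grading N_decr eps_sign by blast

end
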